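(* Let $\alpha: I\to M$ be a unit-speed curve on an oriented surface $M\subset E^3$ with Darboux frame $\{T,V,U\}$ and curvatures $k_g,k_n,\tau_g$. Consider the curve $\gamma$ defined in either of the following two cases: (a) $\tau_g\equiv0$, $k_g$ and $k_n$ nowhere zero, and $\gamma(s)=\alpha(s)+\frac{1}{k_n(s)}U(s)$; (b) $\tau_g$ nowhere zero, $\lambda$ an antiderivative of $k_gk_n/\tau_g$, $\Lambda$ an antiderivative of $e^{-\lambda}$, $c_9$ a real constant, $y_1=e^{\lambda}(c_9-\Lambda)$, $y_3=\frac{k_g}{\tau_g}y_1$, and $\gamma(s)=\alpha(s)+y_1(s)T(s)+y_3(s)U(s)$. In either case assume $\gamma$ is regular. Then $\gamma$ is a general helix if and only if $\alpha$ is an isophote curve on $M$.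
   Context: $M$ is an oriented surface in Euclidean 3-space $E^3$ and $\alpha:I\to M$ is a unit-speed curve with arc-length parameter $s$. Its Darboux frame $\{T,V,U\}$ consists of the unit tangent $T=\alpha'$, the unit surface normal $U$ of $M$ along $\alpha$, and $V=U\times T$; it satisfies $T'=k_gV+k_nU$, $V'=-k_gT+\tau_gU$, $U'=-k_nT-\tau_gV$, where $k_g,k_n,\tau_g$ are the geodesic curvature, normal curvature and geodesic torsion. A regular curve is a general helix if its unit tangent makes a constant angle with a fixed direction. $\alpha$ is an isophote curve if $\langle U,l\rangle$ is constant for some fixed unit vector $l$. *)

theory Defs
  imports "HOL-Analysis.Analysis" "HOL-Analysis.Cross3"
begin

definition darboux_frame ::
  "real set \<Rightarrow> (real \<Rightarrow> real^3) \<Rightarrow> (real \<Rightarrow> real^3) \<Rightarrow> (real \<Rightarrow> real^3) \<Rightarrow> (real \<Rightarrow> real^3)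
   \<Rightarrow> (real \<Rightarrow> real) \<Rightarrow> (real \<Rightarrow> real) \<Rightarrow> (real \<Rightarrow> real) \<Rightarrow> bool" where
  "darboux_frame I \<alpha> T V U kg kn tg \<longleftrightarrow>
     (\<forall>s\<in>I.
        (\<alpha> has_vector_derivative T s) (at s) \<and>
        norm (T s) = 1 \<and> norm (U s) = 1 \<and> T s \<bullet> U s = 0 \<and>
        V s = cross3 (U s) (T s) \<and>
        (T has_vector_derivative (kg s *\<^sub>R V s + kn s *\<^sub>R U s)) (at s) \<and>
        (V has_vector_derivative (- kg s *\<^sub>R T s + tg s *\<^sub>R U s)) (at s) \<and>
        (U has_vector_derivative (- kn s *\<^sub>R T s - tg s *\<^sub>R V s)) (at s))"

definition regular_curve :: "real set \<Rightarrow> (real \<Rightarrow> real^3) \<Rightarrow> bool" where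
  "regular_curve I \<gamma> \<longleftrightarrow>
     (\<forall>s\<in>I. \<gamma> differentiable (at s) \<and> vector_derivative \<gamma> (at s) \<noteq> 0)"

definition general_helix :: "real set \<Rightarrow> (real \<Rightarrow> real^3) \<Rightarrow> bool" where
  "general_helix I \<gamma> \<longleftrightarrow> regular_curve I \<gamma> \<and>
     (\<exists>d c. norm d = 1 \<and>
        (\<forall>s\<in>I. (vector_derivative \<gamma> (at s) /\<^sub>R norm (vector_derivative \<gamma> (at s))) \<bullet> d = c))"

definition isophote_curve :: "real set \<Rightarrow> (real \<Rightarrow> real^3) \<Rightarrow> bool" where
  "isophote_curve I U \<longleftrightarrow> (\<exists>l c. norm l = 1 \<and> (\<forall>s\<in>I. U s \<bullet> l = c))"

end

theory Submission
  imports Defs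
begin

lemma darboux_aux:
  fixes f f' :: "real \<Rightarrow> real"
  assumes ab: "a < b" and der: "\<And>x. x \<in> {a..b} \<Longrightarrow> (f has_real_derivative f' x) (at x)"
    and fa: "f' a > 0" and fb: "f' b < 0"
  shows "\<exists>c. a < c \<and> c < b \<and> f' c = 0"
proof -
  have cont: "continuous_on {a..b} f"
    using der by (meson DERIV_isCont continuous_at_imp_continuous_on)
  obtain c where c: "c \<in> {a..b}" "\<forall>y\<in>{a..b}. f y \<le> f c"
    using continuous_attains_sup[OF compact_Icc _ cont] ab by auto
  obtain d1 where d1: "d1 > 0" "\<forall>h>0. h < d1 \<longrightarrow> f a < f (a + h)"
    using DERIV_pos_inc_right[OF der fa] ab by auto
  obtain d2 where d2: "d2 > 0" "\<forall>h>0. h < d2 \<longrightarrow> f b < f (b - h)"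
    using DERIV_neg_dec_left[OF der fb] ab by auto
  have "c \<noteq> a"
  proof
    assume "c = a"
    define h where "h = min d1 (b - a) / 2"
    have "h > 0" "h < d1" "a + h \<in> {a..b}" using d1 ab by (auto simp: h_def min_def field_simps)
    then have "f a < f (a + h)" using d1 by auto
    moreover have "f (a + h) \<le> f c" using c \<open>a + h \<in> {a..b}\<close> by auto
    ultimately show False using \<open>c = a\<close> by simp
  qed
  moreover have "c \<noteq> b"
  proof
    assume "c = b"
    define h where "h = min d2 (b - a) / 2"
    have "h > 0" "h < d2" "b - h \<in> {a..b}" using d2 ab by (auto simp: h_def min_def field_simps)
    then have "f b < f (b - h)" using d2 by auto
    moreover have "f (b - h) \<le> f c" using c \<open>b - h \<in> {a..b}\<close> by auto
    ultimately show False using \<open>c = b\<close> by simp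
  qed
  ultimately have ac: "a < c" "c < b" using c by auto
  have "f' c = 0"
  proof (rule DERIV_local_max[OF der[of c]])
    show "c \<in> {a..b}" using ac by auto
    show "0 < min (c - a) (b - c)" using ac by auto
    show "\<forall>y. \<bar>c - y\<bar> < min (c - a) (b - c) \<longrightarrow> f y \<le> f c"
      using c by (auto simp: abs_if)
  qed
  with ac show ?thesis by blast
qed

lemma deriv_sign_const:
  fixes f f' :: "real \<Rightarrow> real"
  assumes J: "is_interval J" and der: "\<And>x. x \<in> J \<Longrightarrow> (f has_real_derivative f' x) (at x)"
    and nz: "\<And>x. x \<in> J \<Longrightarrow> f' x \<noteq> 0"
    and x: "x \<in> J" and y: "y \<in> J" and fx: "f' x > 0"
  shows "f' y > 0"
proof (rule ccontr)
  assume "\<not> f' y > 0"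
  with nz[OF y] have fy: "f' y < 0" by auto
  have sub: "\<And>a b. a \<in> J \<Longrightarrow> b \<in> J \<Longrightarrow> {a..b} \<subseteq> J"
    by (meson J atLeastAtMost_iff is_interval_1 subsetI)
  have "x \<noteq> y" using fx fy by auto
  then consider "x < y" | "y < x" by (meson linorder_neqE_linordered_idom)
  then show False
  proof cases
    case 1
    have "\<exists>c. x < c \<and> c < y \<and> f' c = 0"
      by (rule darboux_aux[OF 1, of f f']) (use der sub[OF x y] fx fy in auto)
    then obtain c where "x < c" "c < y" "f' c = 0" by blast
    moreover have "c \<in> J" using sub[OF x y] \<open>x < c\<close> \<open>c < y\<close> by auto
    ultimately show False using nz by blast
  next
    case 2
    have derm: "((\<lambda>t. - f t) has_real_derivative - f' t) (at t)" if "t \<in> {y..x}" for t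
    proof -
      have "t \<in> J" using sub[OF y x] that by auto
      then show ?thesis by (rule DERIV_minus[OF der])
    qed
    have "\<exists>c. y < c \<and> c < x \<and> - f' c = 0"
      by (rule darboux_aux[OF 2, of "\<lambda>t. - f t" "\<lambda>t. - f' t"]) (use derm fx fy in auto)
    then obtain c where "y < c" "c < x" "f' c = 0" by auto
    moreover have "c \<in> J" using sub[OF y x] \<open>y < c\<close> \<open>c < x\<close> by auto
    ultimately show False using nz by blast
  qed
qed

lemma sign_const_vec:
  fixes \<gamma> U :: "real \<Rightarrow> real^3" and g :: "real \<Rightarrow> real"
  assumes I: "open I" "is_interval I"
    and dg: "\<forall>s\<in>I. (\<gamma> has_vector_derivative g s *\<^sub>R U s) (at s)"
    and cU: "\<forall>s\<in>I. isCont U s"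
    and nU: "\<forall>s\<in>I. norm (U s) = 1"
    and nz: "\<forall>s\<in>I. g s \<noteq> 0"
    and a: "a \<in> I" and b: "b \<in> I"
  shows "(g a > 0) = (g b > 0)"
proof (rule connected_local_const[where f = "\<lambda>s. g s > 0"])
  show "connected I" using I by (simp add: is_interval_connected)
  show "a \<in> I" "b \<in> I" by fact+
  show "\<forall>s0\<in>I. \<forall>\<^sub>F s in at s0 within I. (g s0 > 0) = (g s > 0)"
  proof
    fix s0 assume s0: "s0 \<in> I"
    define \<phi> where "\<phi> = (\<lambda>s. U s \<bullet> U s0)"
    have "U s0 \<bullet> U s0 = (norm (U s0))^2" by (simp add: power2_norm_eq_inner)
    then have "\<phi> s0 = 1" using nU s0 by (simp add: \<phi>_def)
    have "isCont \<phi> s0" unfolding \<phi>_def using cU s0 by (intro continuous_intros) auto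
    then have "(\<phi> \<longlongrightarrow> 1) (at s0)" using \<open>\<phi> s0 = 1\<close> by (simp add: isCont_def)
    then have "\<forall>\<^sub>F s in at s0. \<phi> s > 0" by (rule order_tendstoD) simp
    then obtain d1 where d1: "d1 > 0" "\<forall>x. x \<noteq> s0 \<and> dist x s0 < d1 \<longrightarrow> \<phi> x > 0"
      by (auto simp: eventually_at)
    obtain d2 where d2: "d2 > 0" "ball s0 d2 \<subseteq> I" using I(1) s0 open_contains_ball by blast
    define J where "J = ball s0 (min d1 d2)"
    have JI: "J \<subseteq> I" using d2 by (auto simp: J_def)
    have Jphi: "\<phi> x > 0" if "x \<in> J" for x
      using d1 that \<open>\<phi> s0 = 1\<close> by (cases "x = s0") (auto simp: J_def dist_commute)
    have der: "((\<lambda>s. \<gamma> s \<bullet> U s0) has_real_derivative g x * \<phi> x) (at x)" if "x \<in> J" for x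
    proof -
      have "((\<lambda>s. \<gamma> s \<bullet> U s0) has_vector_derivative (g x *\<^sub>R U x) \<bullet> U s0) (at x)"
        using bounded_linear.has_vector_derivative[OF bounded_linear_inner_left dg[rule_format, of x]] JI that
        by auto
      then show ?thesis by (simp add: has_real_derivative_iff_has_vector_derivative \<phi>_def)
    qed
    have nz': "g x * \<phi> x \<noteq> 0" if "x \<in> J" for x using nz JI that Jphi[OF that] by auto
    have s0J: "s0 \<in> J" using d1 d2 by (auto simp: J_def)
    have "(g s0 > 0) = (g x > 0)" if "x \<in> J" for x
    proof
      assume "g s0 > 0"
      then have "g s0 * \<phi> s0 > 0" using Jphi[OF s0J] by simp
      then have "g x * \<phi> x > 0"
        using deriv_sign_const[OF is_interval_ball_real[of s0 "min d1 d2"], folded J_def, OF der nz' s0J that] by auto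
      then show "g x > 0" using Jphi[OF that] by (simp add: zero_less_mult_iff)
    next
      assume "g x > 0"
      then have "g x * \<phi> x > 0" using Jphi[OF that] by simp
      then have "g s0 * \<phi> s0 > 0"
        using deriv_sign_const[OF is_interval_ball_real[of s0 "min d1 d2"], folded J_def, OF der nz' that s0J] by auto
      then show "g s0 > 0" using Jphi[OF s0J] by (simp add: zero_less_mult_iff)
    qed
    then have "\<forall>x\<in>I. x \<noteq> s0 \<and> dist x s0 < min d1 d2 \<longrightarrow> (g s0 > 0) = (g x > 0)"
      by (auto simp: J_def dist_commute)
    then show "\<forall>\<^sub>F s in at s0 within I. (g s0 > 0) = (g s > 0)"
      unfolding eventually_at using d1 d2 by (intro exI[of _ "min d1 d2"]) auto
  qed
qed


lemma helix_iff_aux: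
  fixes \<gamma> U :: "real \<Rightarrow> real^3" and g :: "real \<Rightarrow> real"
  assumes dg: "\<forall>s\<in>I. (\<gamma> has_vector_derivative g s *\<^sub>R U s) (at s)"
    and nU: "\<forall>s\<in>I. norm (U s) = 1"
    and nz: "\<forall>s\<in>I. g s \<noteq> 0"
    and sg: "\<And>a b. a \<in> I \<Longrightarrow> b \<in> I \<Longrightarrow> (g a > 0) = (g b > 0)"
    and reg: "regular_curve I \<gamma>"
  shows "general_helix I \<gamma> \<longleftrightarrow> (\<exists>l c. norm l = 1 \<and> (\<forall>s\<in>I. U s \<bullet> l = c))"
proof -
  define \<sigma> :: real where "\<sigma> = (if \<exists>s\<in>I. g s > 0 then 1 else -1)"
  have sig2: "\<sigma> * \<sigma> = 1" by (simp add: \<sigma>_def)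
  have ut: "vector_derivative \<gamma> (at s) /\<^sub>R norm (vector_derivative \<gamma> (at s)) = \<sigma> *\<^sub>R U s"
    if s: "s \<in> I" for s
  proof -
    have vd: "vector_derivative \<gamma> (at s) = g s *\<^sub>R U s" using dg s vector_derivative_at by blast
    have "g s / \<bar>g s\<bar> = \<sigma>"
    proof (cases "g s > 0")
      case True then show ?thesis using s by (auto simp: \<sigma>_def)
    next
      case False
      then have "g s < 0" using nz s by (meson linorder_neqE_linordered_idom)
      moreover have "\<not> (\<exists>t\<in>I. g t > 0)" using sg[OF s] False by blast
      ultimately show ?thesis by (simp add: \<sigma>_def)
    qed
    moreover have "norm (vector_derivative \<gamma> (at s)) = \<bar>g s\<bar>" using vd nU s by simp
    ultimately show ?thesis using vd nU s by (simp add: scaleR_scaleR divide_inverse mult.commute)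
  qed
  have "general_helix I \<gamma> \<longleftrightarrow> (\<exists>d c. norm d = 1 \<and> (\<forall>s\<in>I. (\<sigma> *\<^sub>R U s) \<bullet> d = c))"
    unfolding general_helix_def using reg ut by simp
  also have "\<dots> \<longleftrightarrow> (\<exists>l c. norm l = 1 \<and> (\<forall>s\<in>I. U s \<bullet> l = c))"
  proof
    assume "\<exists>d c. norm d = 1 \<and> (\<forall>s\<in>I. (\<sigma> *\<^sub>R U s) \<bullet> d = c)"
    then obtain d c where h: "norm d = 1" "\<forall>s\<in>I. (\<sigma> *\<^sub>R U s) \<bullet> d = c" by blast
    have "\<forall>s\<in>I. U s \<bullet> d = \<sigma> * c"
    proof
      fix s assume "s \<in> I"
      then have "\<sigma> * (U s \<bullet> d) = c" using h by simp
      then have "\<sigma> * (\<sigma> * (U s \<bullet> d)) = \<sigma> * c" by simp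
      then show "U s \<bullet> d = \<sigma> * c" using sig2 by (simp add: mult.assoc[symmetric])
    qed
    then show "\<exists>l c. norm l = 1 \<and> (\<forall>s\<in>I. U s \<bullet> l = c)" using h by blast
  next
    assume "\<exists>l c. norm l = 1 \<and> (\<forall>s\<in>I. U s \<bullet> l = c)"
    then obtain l c where h: "norm l = 1" "\<forall>s\<in>I. U s \<bullet> l = c" by blast
    then have "\<forall>s\<in>I. (\<sigma> *\<^sub>R U s) \<bullet> l = \<sigma> * c" by simp
    then show "\<exists>d c. norm d = 1 \<and> (\<forall>s\<in>I. (\<sigma> *\<^sub>R U s) \<bullet> d = c)" using h by blast
  qed
  finally show ?thesis .
qed


theorem theorem3p27:
  fixes I :: "real set"
    and \<alpha> T V U \<gamma> :: "real \<Rightarrow> real^3"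
    and kg kn tg :: "real \<Rightarrow> real"
  assumes I: "open I" "is_interval I"
    and frame: "darboux_frame I \<alpha> T V U kg kn tg"
    and smooth: "\<forall>s\<in>I. kg differentiable (at s) \<and> kn differentiable (at s) \<and> tg differentiable (at s)"
    and cases:
      "((\<forall>s\<in>I. tg s = 0 \<and> kg s \<noteq> 0 \<and> kn s \<noteq> 0) \<and>
        (\<forall>s\<in>I. \<gamma> s = \<alpha> s + (1 / kn s) *\<^sub>R U s))
       \<or>
       ((\<forall>s\<in>I. tg s \<noteq> 0) \<and>
        (\<exists>lam Lam c9 y1 y3.
           (\<forall>s\<in>I. (lam has_real_derivative (kg s * kn s / tg s)) (at s)) \<and>
           (\<forall>s\<in>I. (Lam has_real_derivative exp (- lam s)) (at s)) \<and>
           (\<forall>s\<in>I. y1 s = exp (lam s) * (c9 - Lam s)) \<and>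
           (\<forall>s\<in>I. y3 s = kg s / tg s * y1 s) \<and>
           (\<forall>s\<in>I. \<gamma> s = \<alpha> s + y1 s *\<^sub>R T s + y3 s *\<^sub>R U s)))"
    and reg: "regular_curve I \<gamma>"
  shows "general_helix I \<gamma> \<longleftrightarrow> isophote_curve I U"
proof -
  note fr = frame[unfolded darboux_frame_def]
  have dA: "(\<alpha> has_vector_derivative T s) (at s)" and dT: "(T has_vector_derivative (kg s *\<^sub>R V s + kn s *\<^sub>R U s)) (at s)"
    and dU: "(U has_vector_derivative (- kn s *\<^sub>R T s - tg s *\<^sub>R V s)) (at s)"
    and nU: "norm (U s) = 1"
    if "s \<in> I" for s using fr that by blast+
  have dkn: "(kn has_real_derivative deriv kn s) (at s)" and dkg: "(kg has_real_derivative deriv kg s) (at s)"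
    and dtg: "(tg has_real_derivative deriv tg s) (at s)"
    if "s \<in> I" for s using smooth that DERIV_deriv_iff_real_differentiable by blast+
  obtain g where dg: "\<forall>s\<in>I. (\<gamma> has_vector_derivative g s *\<^sub>R U s) (at s)"
    using cases
  proof
    assume A: "(\<forall>s\<in>I. tg s = 0 \<and> kg s \<noteq> 0 \<and> kn s \<noteq> 0) \<and> (\<forall>s\<in>I. \<gamma> s = \<alpha> s + (1 / kn s) *\<^sub>R U s)"
    have "(\<gamma> has_vector_derivative (- (deriv kn s * inverse (kn s ^ 2))) *\<^sub>R U s) (at s)" if s: "s \<in> I" for s
    proof -
      have d1: "((\<lambda>s. 1 / kn s) has_real_derivative - (deriv kn s * inverse (kn s ^ 2))) (at s)"
        using DERIV_inverse_fun[OF dkn[OF s]] A s by (simp add: inverse_eq_divide power2_eq_square)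
      have d0: "((\<lambda>s. \<alpha> s + (1 / kn s) *\<^sub>R U s) has_vector_derivative
          T s + ((1 / kn s) *\<^sub>R (- kn s *\<^sub>R T s - tg s *\<^sub>R V s) + (- (deriv kn s * inverse (kn s ^ 2))) *\<^sub>R U s)) (at s)"
        by (intro has_vector_derivative_add has_vector_derivative_scaleR dA dU d1 s)
      have e: "T s + ((1 / kn s) *\<^sub>R (- kn s *\<^sub>R T s - tg s *\<^sub>R V s) + (- (deriv kn s * inverse (kn s ^ 2))) *\<^sub>R U s)
          = (- (deriv kn s * inverse (kn s ^ 2))) *\<^sub>R U s"
        using A s by (simp add: scaleR_diff_right)
      have dF: "((\<lambda>s. \<alpha> s + (1 / kn s) *\<^sub>R U s) has_vector_derivative
          (- (deriv kn s * inverse (kn s ^ 2))) *\<^sub>R U s) (at s)"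
        using d0 unfolding e by assumption
      show ?thesis
        by (rule has_vector_derivative_transform_within_open[OF dF I(1) s]) (use A in auto)
    qed
    then show ?thesis using that[of "\<lambda>s. - (deriv kn s * inverse (kn s ^ 2))"] by blast
  next
    assume B: "(\<forall>s\<in>I. tg s \<noteq> 0) \<and>
        (\<exists>lam Lam c9 y1 y3.
           (\<forall>s\<in>I. (lam has_real_derivative (kg s * kn s / tg s)) (at s)) \<and>
           (\<forall>s\<in>I. (Lam has_real_derivative exp (- lam s)) (at s)) \<and>
           (\<forall>s\<in>I. y1 s = exp (lam s) * (c9 - Lam s)) \<and>
           (\<forall>s\<in>I. y3 s = kg s / tg s * y1 s) \<and>
           (\<forall>s\<in>I. \<gamma> s = \<alpha> s + y1 s *\<^sub>R T s + y3 s *\<^sub>R U s))"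
    then obtain lam Lam c9 y1 y3 where tg0: "\<forall>s\<in>I. tg s \<noteq> 0"
      and hl: "\<forall>s\<in>I. (lam has_real_derivative (kg s * kn s / tg s)) (at s)"
      and hL: "\<forall>s\<in>I. (Lam has_real_derivative exp (- lam s)) (at s)"
      and y1: "\<forall>s\<in>I. y1 s = exp (lam s) * (c9 - Lam s)"
      and y3: "\<forall>s\<in>I. y3 s = kg s / tg s * y1 s"
      and ga: "\<forall>s\<in>I. \<gamma> s = \<alpha> s + y1 s *\<^sub>R T s + y3 s *\<^sub>R U s" by blast
    define Y1 where "Y1 = (\<lambda>s. exp (lam s) * (c9 - Lam s))"
    define Y3 where "Y3 = (\<lambda>s. kg s / tg s * Y1 s)"
    have "(\<gamma> has_vector_derivative (Y1 s * kn s + deriv Y3 s) *\<^sub>R U s) (at s)" if s: "s \<in> I" for s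
    proof -
      define D1 where "D1 = exp (lam s) * (kg s * kn s / tg s) * (c9 - Lam s) + exp (lam s) * (- exp (- lam s))"
      have dY1: "(Y1 has_real_derivative D1) (at s)"
        unfolding Y1_def D1_def using hl hL s by (auto intro!: derivative_eq_intros)
      have D1: "D1 = kg s * kn s / tg s * Y1 s - 1"
        using tg0 s by (simp add: D1_def Y1_def exp_minus field_simps)
      have "\<exists>D. (Y3 has_real_derivative D) (at s)"
        unfolding Y3_def using DERIV_mult[OF DERIV_divide[OF dkg[OF s] dtg[OF s]] dY1] tg0 s
        by blast
      then have dY3: "(Y3 has_real_derivative deriv Y3 s) (at s)" using DERIV_imp_deriv by blast
      have "((\<lambda>s. \<alpha> s + Y1 s *\<^sub>R T s + Y3 s *\<^sub>R U s) has_vector_derivative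
          T s + (Y1 s *\<^sub>R (kg s *\<^sub>R V s + kn s *\<^sub>R U s) + D1 *\<^sub>R T s)
              + (Y3 s *\<^sub>R (- kn s *\<^sub>R T s - tg s *\<^sub>R V s) + deriv Y3 s *\<^sub>R U s)) (at s)"
        by (intro has_vector_derivative_add has_vector_derivative_scaleR dA dU dT dY1 dY3 s)
      moreover have "T s + (Y1 s *\<^sub>R (kg s *\<^sub>R V s + kn s *\<^sub>R U s) + D1 *\<^sub>R T s)
              + (Y3 s *\<^sub>R (- kn s *\<^sub>R T s - tg s *\<^sub>R V s) + deriv Y3 s *\<^sub>R U s)
          = (1 + D1 - Y3 s * kn s) *\<^sub>R T s + (Y1 s * kg s - Y3 s * tg s) *\<^sub>R V s
             + (Y1 s * kn s + deriv Y3 s) *\<^sub>R U s"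
        by (simp add: algebra_simps)
      moreover have "1 + D1 - Y3 s * kn s = 0" "Y1 s * kg s - Y3 s * tg s = 0"
        using tg0 s by (simp_all add: D1 Y3_def field_simps)
      ultimately have "((\<lambda>s. \<alpha> s + Y1 s *\<^sub>R T s + Y3 s *\<^sub>R U s) has_vector_derivative
          (Y1 s * kn s + deriv Y3 s) *\<^sub>R U s) (at s)" by simp
      then show ?thesis
        by (rule has_vector_derivative_transform_within_open[OF _ I(1) s]) (use ga y1 y3 in \<open>auto simp: Y1_def Y3_def\<close>)
    qed
    then show ?thesis using that[of "\<lambda>s. Y1 s * kn s + deriv Y3 s"] by blast
  qed
  have nz: "\<forall>s\<in>I. g s \<noteq> 0"
  proof
    fix s assume s: "s \<in> I"
    then have "vector_derivative \<gamma> (at s) = g s *\<^sub>R U s" using dg vector_derivative_at by blast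
    then show "g s \<noteq> 0" using reg s unfolding regular_curve_def by auto
  qed
  have cU: "\<forall>s\<in>I. isCont U s" using dU has_vector_derivative_continuous by blast
  have sg: "(g a > 0) = (g b > 0)" if "a \<in> I" "b \<in> I" for a b
    using sign_const_vec[OF I dg cU _ nz that] nU by blast
  show ?thesis
    unfolding isophote_curve_def using helix_iff_aux[OF dg _ nz sg reg] nU by blast
qed

end
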